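(* Let $(\mathfrak A,\alpha,\varphi)$ be a $C^*$-dynamical system with GNS covariant representation $(\mathcal H_\varphi,\pi_\varphi,U,\Phi)$, let $\omega$ be a state on $\mathfrak A$ (not necessarily $\alpha$-invariant, nor normal w.r.t. $\varphi$) with GNS representation $(\mathcal H_\omega,\pi_\omega,\Omega)$, and let $\mathfrak B\subset\mathfrak A$ be a $*$-subalgebra such that $\omega$ is generic for $(\mathfrak A,\alpha,\varphi)$ w.r.t. $\mathfrak B$. Let $E_1$ be the orthogonal projection onto the $U$-invariant vectors of $\mathcal H_\varphi$, and assume that $\{\pi_\varphi(B)\Phi: B\in\mathfrak B,\ \alpha(B)=B\}$ is dense in $E_1\mathcal H_\varphi$. Then there is a unique partial isometry $V:\mathcal H_\varphi\to\mathcal H_\omega$ with $V^*V=E_1$ and $V\pi_\varphi(B)\Phi=\pi_\omega(B)\Omega$ for every $B\in\mathfrak B$ with $\alpha(B)=B$; in particular $\|\pi_\omega(B)\Omega\|=\|\pi_\varphi(B)\Phi\|$ for all such $B$.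
   Context: A $C^*$-dynamical system $(\mathfrak A,\alpha,\varphi)$ consists of a $C^*$-algebra $\mathfrak A$, an automorphism $\alpha$ and an $\alpha$-invariant state $\varphi$; its GNS covariant representation is the GNS triple $(\mathcal H_\varphi,\pi_\varphi,\Phi)$ of $\varphi$ together with the unitary $U$ defined by $U\pi_\varphi(A)\Phi=\pi_\varphi(\alpha(A))\Phi$. A state $\omega$ on $\mathfrak A$ is generic for $(\mathfrak A,\alpha,\varphi)$ w.r.t. $\mathfrak B$ if $\lim_{N\to\infty}\frac1N\sum_{n=0}^{N-1}\omega(\alpha^n(B))=\varphi(B)$ for every $B\in\mathfrak B$. *)

theory Defs
  imports "HOL-Analysis.Analysis"
begin

class complex_vector = real_vector +
  fixes scaleC :: "complex \<Rightarrow> 'a \<Rightarrow> 'a"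
  assumes scaleC_add_right: "scaleC c (x + y) = scaleC c x + scaleC c y"
    and scaleC_add_left: "scaleC (c + d) x = scaleC c x + scaleC d x"
    and scaleC_scaleC: "scaleC c (scaleC d x) = scaleC (c * d) x"
    and scaleC_one: "scaleC 1 x = x"
    and scaleR_scaleC: "scaleR r x = scaleC (complex_of_real r) x"

class complex_normed_vector = complex_vector + real_normed_vector +
  assumes norm_scaleC: "norm (scaleC c x) = cmod c * norm x"

text \<open>Complex inner product, linear in the second and conjugate-linear in the first argument.\<close>
class complex_inner = complex_normed_vector +
  fixes cinner :: "'a \<Rightarrow> 'a \<Rightarrow> complex"
  assumes cinner_commute: "cinner x y = cnj (cinner y x)"
    and cinner_add_right: "cinner x (y + z) = cinner x y + cinner x z"
    and cinner_scaleC_right: "cinner x (scaleC c y) = c * cinner x y"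
    and cinner_self_nonneg: "Im (cinner x x) = 0 \<and> Re (cinner x x) \<ge> 0"
    and cinner_eq_zero_iff: "cinner x x = 0 \<longleftrightarrow> x = 0"
    and norm_eq_sqrt_cinner: "norm x = sqrt (Re (cinner x x))"

class chilbert_space = complex_inner + complete_space

text \<open>(Not necessarily unital) C*-algebras.\<close>
class cstar_algebra = complex_normed_vector + real_normed_algebra + complete_space +
  fixes cstar :: "'a \<Rightarrow> 'a"
  assumes cstar_cstar: "cstar (cstar x) = x"
    and cstar_add: "cstar (x + y) = cstar x + cstar y"
    and cstar_scaleC: "cstar (scaleC c x) = scaleC (cnj c) (cstar x)"
    and cstar_mult: "cstar (x * y) = cstar y * cstar x"
    and scaleC_mult_left: "scaleC c x * y = scaleC c (x * y)"
    and scaleC_mult_right: "x * scaleC c y = scaleC c (x * y)"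
    and cstar_identity: "norm (cstar x * x) = norm x * norm x"

definition clinear_fun :: "('a::complex_vector \<Rightarrow> 'b::complex_vector) \<Rightarrow> bool" where
  "clinear_fun f \<longleftrightarrow> (\<forall>x y. f (x + y) = f x + f y) \<and> (\<forall>c x. f (scaleC c x) = scaleC c (f x))"

definition clinear_functional :: "('a::complex_vector \<Rightarrow> complex) \<Rightarrow> bool" where
  "clinear_functional f \<longleftrightarrow> (\<forall>x y. f (x + y) = f x + f y) \<and> (\<forall>c x. f (scaleC c x) = c * f x)"

definition is_state :: "('a::cstar_algebra \<Rightarrow> complex) \<Rightarrow> bool" where
  "is_state \<omega> \<longleftrightarrow> clinear_functional \<omega>
     \<and> (\<forall>a. Im (\<omega> (cstar a * a)) = 0 \<and> Re (\<omega> (cstar a * a)) \<ge> 0)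
     \<and> (\<forall>a. cmod (\<omega> a) \<le> norm a)
     \<and> (\<forall>e>0. \<exists>a. norm a \<le> 1 \<and> cmod (\<omega> a) > 1 - e)"

definition is_automorphism :: "('a::cstar_algebra \<Rightarrow> 'a) \<Rightarrow> bool" where
  "is_automorphism \<alpha> \<longleftrightarrow> bij \<alpha> \<and> clinear_fun \<alpha>
     \<and> (\<forall>x y. \<alpha> (x * y) = \<alpha> x * \<alpha> y) \<and> (\<forall>x. \<alpha> (cstar x) = cstar (\<alpha> x))"

definition is_cstar_dynamical_system ::
  "('a::cstar_algebra \<Rightarrow> 'a) \<Rightarrow> ('a \<Rightarrow> complex) \<Rightarrow> bool" where
  "is_cstar_dynamical_system \<alpha> \<phi> \<longleftrightarrow>
     is_automorphism \<alpha> \<and> is_state \<phi> \<and> (\<forall>a. \<phi> (\<alpha> a) = \<phi> a)"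

definition is_star_subalgebra :: "'a::cstar_algebra set \<Rightarrow> bool" where
  "is_star_subalgebra B \<longleftrightarrow> 0 \<in> B
     \<and> (\<forall>x\<in>B. \<forall>y\<in>B. x + y \<in> B \<and> x * y \<in> B)
     \<and> (\<forall>c. \<forall>x\<in>B. scaleC c x \<in> B)
     \<and> (\<forall>x\<in>B. cstar x \<in> B)"

definition cbounded_linear :: "('h::complex_normed_vector \<Rightarrow> 'k::complex_normed_vector) \<Rightarrow> bool" where
  "cbounded_linear T \<longleftrightarrow> clinear_fun T \<and> (\<exists>K. \<forall>x. norm (T x) \<le> K * norm x)"

definition is_adjoint :: "('h::complex_inner \<Rightarrow> 'k::complex_inner) \<Rightarrow> ('k \<Rightarrow> 'h) \<Rightarrow> bool" where
  "is_adjoint T S \<longleftrightarrow> (\<forall>x y. cinner (S x) y = cinner x (T y))"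

definition is_unitary :: "('h::complex_inner \<Rightarrow> 'h) \<Rightarrow> bool" where
  "is_unitary U \<longleftrightarrow> cbounded_linear U \<and> surj U \<and> (\<forall>x y. cinner (U x) (U y) = cinner x y)"

definition is_orth_proj :: "('h::complex_inner \<Rightarrow> 'h) \<Rightarrow> 'h set \<Rightarrow> bool" where
  "is_orth_proj P M \<longleftrightarrow> (\<forall>x. P x \<in> M \<and> (\<forall>m\<in>M. cinner m (x - P x) = 0))"

definition partial_isometry :: "('h::complex_inner \<Rightarrow> 'k::complex_inner) \<Rightarrow> bool" where
  "partial_isometry V \<longleftrightarrow> cbounded_linear V
     \<and> (\<exists>W. is_adjoint V W \<and> (W \<circ> V) \<circ> (W \<circ> V) = W \<circ> V)"

definition is_representation :: "('a::cstar_algebra \<Rightarrow> 'h::chilbert_space \<Rightarrow> 'h) \<Rightarrow> bool" where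
  "is_representation \<pi> \<longleftrightarrow> (\<forall>a. cbounded_linear (\<pi> a))
     \<and> (\<forall>a b. \<pi> (a + b) = (\<lambda>x. \<pi> a x + \<pi> b x))
     \<and> (\<forall>c a. \<pi> (scaleC c a) = (\<lambda>x. scaleC c (\<pi> a x)))
     \<and> (\<forall>a b. \<pi> (a * b) = \<pi> a \<circ> \<pi> b)
     \<and> (\<forall>a. is_adjoint (\<pi> a) (\<pi> (cstar a)))"

text \<open>GNS representation \<open>(H, \<pi>, \<Omega>)\<close> of a state \<open>\<omega>\<close> (the Hilbert space is the type \<open>'h\<close>):
  a cyclic representation with cyclic vector \<open>\<Omega>\<close> such that \<open>\<omega>(A) = \<langle>\<Omega>, \<pi>(A)\<Omega>\<rangle>\<close>.\<close>
definition is_GNS :: "('a::cstar_algebra \<Rightarrow> complex) \<Rightarrow> ('a \<Rightarrow> 'h::chilbert_space \<Rightarrow> 'h) \<Rightarrow> 'h \<Rightarrow> bool" where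
  "is_GNS \<omega> \<pi> \<Omega> \<longleftrightarrow> is_representation \<pi>
     \<and> closure (range (\<lambda>a. \<pi> a \<Omega>)) = UNIV
     \<and> (\<forall>a. cinner \<Omega> (\<pi> a \<Omega>) = \<omega> a)"

definition is_GNS_covariant ::
  "('a::cstar_algebra \<Rightarrow> 'a) \<Rightarrow> ('a \<Rightarrow> complex) \<Rightarrow> ('a \<Rightarrow> 'h::chilbert_space \<Rightarrow> 'h) \<Rightarrow> ('h \<Rightarrow> 'h) \<Rightarrow> 'h \<Rightarrow> bool" where
  "is_GNS_covariant \<alpha> \<phi> \<pi> U \<Phi> \<longleftrightarrow> is_GNS \<phi> \<pi> \<Phi> \<and> is_unitary U
     \<and> (\<forall>a. U (\<pi> a \<Phi>) = \<pi> (\<alpha> a) \<Phi>)"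

definition generic :: "('a::cstar_algebra \<Rightarrow> complex) \<Rightarrow> ('a \<Rightarrow> 'a) \<Rightarrow> ('a \<Rightarrow> complex) \<Rightarrow> 'a set \<Rightarrow> bool" where
  "generic \<omega> \<alpha> \<phi> B \<longleftrightarrow> (\<forall>b\<in>B.
     (\<lambda>N. (\<Sum>n<N. \<omega> ((\<alpha> ^^ n) b)) / of_nat N) \<longlonglongrightarrow> \<phi> b)"

end

theory Submission imports Defs begin

lemma scaleC_minus1: "scaleC (-1) (x::'a::complex_vector) = - x"
  using scaleR_scaleC[of "-1" x] by simp

lemma scaleC_zero_right: "scaleC c (0::'a::complex_vector) = 0"
  using scaleC_add_right[of c 0 0] by simp

lemma scaleC_zero_left: "scaleC 0 (x::'a::complex_vector) = 0"
  using scaleR_scaleC[of 0 x] by simp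

lemma scaleC_minus_right: "scaleC c (- x::'a::complex_vector) = - scaleC c x"
proof -
  have "scaleC c (-x) + scaleC c x = 0" using scaleC_add_right[of c "-x" x] by (simp add: scaleC_zero_right)
  then show ?thesis by (simp add: add_eq_0_iff)
qed

lemma scaleC_diff_right: "scaleC c (x - y::'a::complex_vector) = scaleC c x - scaleC c y"
  using scaleC_add_right[of c x "-y"] by (simp add: scaleC_minus_right)

lemma scaleC_of_real: "scaleC (of_real r) (x::'a::complex_vector) = scaleR r x"
  by (rule scaleR_scaleC[symmetric])

lemma bounded_linear_scaleC: "bounded_linear (scaleC c :: 'a::complex_normed_vector \<Rightarrow> 'a)"
proof (rule bounded_linear_intro[where K="cmod c"])
  fix x y :: 'a show "scaleC c (x + y) = scaleC c x + scaleC c y" by (rule scaleC_add_right)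
next
  fix r x show "scaleC c (scaleR r (x::'a)) = scaleR r (scaleC c x)"
    by (simp add: scaleR_scaleC scaleC_scaleC mult.commute)
next
  fix x :: 'a show "norm (scaleC c x) \<le> norm x * cmod c" by (simp add: norm_scaleC)
qed

lemma cinner_add_left: "cinner (x + y) (z::'a::complex_inner) = cinner x z + cinner y z"
  by (metis cinner_add_right cinner_commute complex_cnj_add)

lemma cinner_scaleC_left: "cinner (scaleC c x) (y::'a::complex_inner) = cnj c * cinner x y"
  by (metis cinner_commute cinner_scaleC_right complex_cnj_mult)

lemma cinner_zero_right[simp]: "cinner x (0::'a::complex_inner) = 0"
  using cinner_add_right[of x 0 0] by simp

lemma cinner_zero_left[simp]: "cinner 0 (x::'a::complex_inner) = 0"
  using cinner_add_left[of 0 0 x] by simp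

lemma cinner_minus_right: "cinner x (- y::'a::complex_inner) = - cinner x y"
proof -
  have "cinner x (-y) + cinner x y = 0" using cinner_add_right[of x "-y" y] by simp
  then show ?thesis by (simp add: add_eq_0_iff)
qed

lemma cinner_minus_left: "cinner (- x) (y::'a::complex_inner) = - cinner x y"
  using cinner_commute[of "-x" y] cinner_commute[of x y] by (simp add: cinner_minus_right)

lemma cinner_diff_right: "cinner x (y - z::'a::complex_inner) = cinner x y - cinner x z"
  using cinner_add_right[of x y "-z"] by (simp add: cinner_minus_right)

lemma cinner_diff_left: "cinner (x - y) (z::'a::complex_inner) = cinner x z - cinner y z"
  using cinner_add_left[of x "-y" z] by (simp add: cinner_minus_left)

lemma norm_sq: "(norm (x::'a::complex_inner))^2 = Re (cinner x x)"
  using norm_eq_sqrt_cinner[of x] cinner_self_nonneg[of x] by simp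

lemma cinner_self: "cinner (x::'a::complex_inner) x = of_real ((norm x)^2)"
  using norm_sq[of x] cinner_self_nonneg[of x] by (simp add: complex_eq_iff)

lemma norm_add_sq: "(norm (x + y::'a::complex_inner))^2 = (norm x)^2 + (norm y)^2 + 2 * Re (cinner x y)"
proof -
  have "cinner y x = cnj (cinner x y)" by (rule cinner_commute)
  then show ?thesis unfolding norm_sq by (simp add: cinner_add_left cinner_add_right)
qed

lemma norm_diff_sq: "(norm (x - y::'a::complex_inner))^2 = (norm x)^2 + (norm y)^2 - 2 * Re (cinner x y)"
  using norm_add_sq[of x "-y"] by (simp add: cinner_minus_right)

lemma cinner_self_zero: "cinner (x::'a::complex_inner) x = 0 \<Longrightarrow> x = 0"
  using cinner_eq_zero_iff by blast

lemma Re_minus_i: "Re (- \<i> * z) = Im z" by simp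

lemma cinner_eq_from_norms:
  fixes x y :: "'a::complex_inner" and u v :: "'b::complex_inner"
  assumes "norm (u + v) = norm (x + y)" "norm u = norm x" "norm v = norm y"
    and "norm (u + scaleC (-\<i>) v) = norm (x + scaleC (-\<i>) y)" "norm (scaleC (-\<i>) v) = norm (scaleC (-\<i>) y)"
  shows "cinner u v = cinner x y"
proof -
  have re: "Re (cinner u v) = Re (cinner x y)"
    using assms(1-3) norm_add_sq[of u v] norm_add_sq[of x y] by simp
  have "Re (cinner u (scaleC (-\<i>) v)) = Re (cinner x (scaleC (-\<i>) y))"
    using assms(2,4,5) norm_add_sq[of u "scaleC (-\<i>) v"] norm_add_sq[of x "scaleC (-\<i>) y"] by simp
  then have "Im (cinner u v) = Im (cinner x y)" by (simp add: cinner_scaleC_right)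
  with re show ?thesis by (simp add: complex_eq_iff)
qed

lemma real_quad0:
  fixes a b :: real
  assumes "\<And>t. 0 \<le> t^2 * b - 2 * t * a" "b > 0"
  shows "a = 0"
proof -
  have "0 \<le> (a/b)^2 * b - 2 * (a/b) * a" by (rule assms(1))
  also have "\<dots> = - (a^2 / b)" using assms(2) by (simp add: power2_eq_square field_simps)
  finally have "a^2 / b \<le> 0" by simp
  then have "a^2 \<le> 0" using assms(2) by (simp add: divide_le_0_iff)
  then show ?thesis by simp
qed


lemma cbl_bl:
  assumes "cbounded_linear (T :: 'a::complex_normed_vector \<Rightarrow> 'b::complex_normed_vector)"
  shows "bounded_linear T"
proof -
  from assms obtain K where lin: "clinear_fun T" and K: "\<And>x. norm (T x) \<le> K * norm x"
    unfolding cbounded_linear_def by blast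
  show ?thesis
  proof (rule bounded_linear_intro[where K=K])
    fix x y show "T (x + y) = T x + T y" using lin unfolding clinear_fun_def by blast
  next
    fix r x show "T (scaleR r x) = scaleR r (T x)"
      using lin unfolding clinear_fun_def by (simp add: scaleR_scaleC)
  next
    fix x show "norm (T x) \<le> norm x * K" using K[of x] by (simp add: mult.commute)
  qed
qed

lemma proj_exists:
  fixes N :: "'k::complex_inner set" and x :: 'k
  assumes N0: "0 \<in> N" and Nadd: "\<And>a b. a\<in>N \<Longrightarrow> b\<in>N \<Longrightarrow> a+b\<in>N"
    and Nsc: "\<And>c a. a\<in>N \<Longrightarrow> scaleC c a \<in> N" and comp: "complete N"
  shows "\<exists>p\<in>N. \<forall>m\<in>N. cinner m (x - p) = 0"
proof -
  define d where "d = infdist x N"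
  have d0: "0 \<le> d" by (simp add: d_def infdist_nonneg)
  have dle: "d \<le> norm (x - a)" if "a\<in>N" for a using infdist_le[OF that, of x] by (simp add: d_def dist_norm)
  have ex: "\<exists>a\<in>N. norm (x - a) < d + e" if "e > 0" for e
  proof -
    have "infdist x N = Inf ((\<lambda>a. dist x a) ` N)" using N0 by (auto simp: infdist_def)
    then have "Inf ((\<lambda>a. dist x a) ` N) < d + e" using that by (simp add: d_def)
    from cInf_lessD[OF _ this] N0 show ?thesis by (auto simp: dist_norm)
  qed
  define e :: "nat \<Rightarrow> real" where "e n = 1 / real (Suc n)" for n
  have epos: "e n > 0" for n by (simp add: e_def)
  have ele: "e n \<le> 1" for n by (simp add: e_def)
  have "\<forall>n. \<exists>a. a \<in> N \<and> norm (x - a) < d + e n" using ex epos by blast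
  then obtain a where aN: "\<And>n. a n \<in> N" and ad: "\<And>n. norm (x - a n) < d + e n" by metis
  have halfN: "scaleR (1/2) (a n + a m) \<in> N" for n m
  proof -
    have "scaleC (of_real (1/2)) (a n + a m) \<in> N" by (rule Nsc[OF Nadd[OF aN aN]])
    then show ?thesis by (simp only: scaleC_of_real)
  qed
  have bound: "(norm (a n - a m))^2 \<le> (4*d+2) * (e n + e m)" for n m
  proof -
    define u where "u = x - a n"
    define v where "v = x - a m"
    have par: "(norm (u+v))^2 + (norm (u-v))^2 = 2*(norm u)^2 + 2*(norm v)^2"
      using norm_add_sq[of u v] norm_diff_sq[of u v] by simp
    have "u - v = a m - a n" by (simp add: u_def v_def)
    then have uv: "norm (u - v) = norm (a n - a m)" by (simp add: norm_minus_commute)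
    have "u + v = scaleR 2 (x - scaleR (1/2) (a n + a m))"
      by (simp add: u_def v_def algebra_simps scaleR_2)
    then have "norm (u + v) = 2 * norm (x - scaleR (1/2) (a n + a m))" by simp
    also have "\<dots> \<ge> 2 * d" using dle[OF halfN] by simp
    finally have "norm (u+v) \<ge> 2*d" .
    then have "(2*d)^2 \<le> (norm (u+v))^2" using d0 by (intro power_mono) auto
    then have s1: "(norm (u+v))^2 \<ge> 4*d^2" by (simp add: power_mult_distrib)
    have "norm u < d + e n" using ad by (simp add: u_def)
    then have s2: "(norm u)^2 \<le> (d + e n)^2" by (simp add: power_mono)
    have "norm v < d + e m" using ad by (simp add: v_def)
    then have s3: "(norm v)^2 \<le> (d + e m)^2" by (simp add: power_mono)
    have "(norm (a n - a m))^2 \<le> 2*(d + e n)^2 + 2*(d + e m)^2 - 4*d^2"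
      using par s1 s2 s3 unfolding uv[symmetric] by linarith
    also have "\<dots> = 4*d*e n + 2 * e n * e n + 4*d*e m + 2 * e m * e m"
      by (simp add: power2_eq_square algebra_simps)
    also have "\<dots> \<le> (4*d+2) * (e n + e m)"
    proof -
      have h1: "e n * e n \<le> e n" using mult_left_mono[OF ele[of n], of "e n"] epos[of n] by simp
      have h2: "e m * e m \<le> e m" using mult_left_mono[OF ele[of m], of "e m"] epos[of m] by simp
      show ?thesis unfolding distrib_left distrib_right using h1 h2 by linarith
    qed
    finally show ?thesis .
  qed
  have cauchy: "Cauchy a"
  proof (rule CauchyI)
    fix r :: real assume r: "0 < r"
    obtain M :: nat where M: "2*(4*d+2) / r^2 < real M" using reals_Archimedean2 by blast
    have "\<forall>m\<ge>M. \<forall>n\<ge>M. norm (a m - a n) < r"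
    proof (intro allI impI)
      fix m n assume mn: "m \<ge> M" "n \<ge> M"
      have em: "e m \<le> 1 / real (Suc M)" using mn by (simp add: e_def frac_le)
      have en: "e n \<le> 1 / real (Suc M)" using mn by (simp add: e_def frac_le)
      have "(norm (a m - a n))^2 \<le> (4*d+2) * (e m + e n)" by (rule bound)
      also have "\<dots> \<le> (4*d+2) * (2 / real (Suc M))"
        using em en d0 by (intro mult_left_mono) auto
      also have "\<dots> < r^2"
      proof -
        have "2*(4*d+2) < r^2 * real M" using M r by (simp add: field_simps)
        also have "\<dots> \<le> r^2 * real (Suc M)" using r by (intro mult_left_mono) auto
        finally show ?thesis by (simp add: field_simps)
      qed
      finally have "(norm (a m - a n))^2 < r^2" .
      then show "norm (a m - a n) < r" using r by (simp add: power_less_imp_less_base)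
    qed
    then show "\<exists>M. \<forall>m\<ge>M. \<forall>n\<ge>M. norm (a m - a n) < r" by blast
  qed
  obtain p where pN: "p \<in> N" and lim: "a \<longlonglongrightarrow> p"
    using comp aN cauchy unfolding complete_def by blast
  have "(\<lambda>n. norm (x - a n)) \<longlonglongrightarrow> norm (x - p)" by (intro tendsto_intros lim)
  moreover have "(\<lambda>n. d + e n) \<longlonglongrightarrow> d + 0"
    unfolding e_def using LIMSEQ_inverse_real_of_nat by (intro tendsto_intros) (simp add: inverse_eq_divide)
  ultimately have "norm (x - p) \<le> d + 0"
    by (rule LIMSEQ_le) (use ad less_imp_le in blast)
  then have pmin: "norm (x - p) \<le> norm (x - p - w)" if "w \<in> N" for w
    using dle[OF Nadd[OF pN that]] by (simp add: algebra_simps)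
  define z where "z = x - p"
  have re0: "Re (cinner z m) = 0" if mN: "m \<in> N" for m
  proof (cases "m = 0")
    case True then show ?thesis by simp
  next
    case False
    have "0 \<le> t^2 * (norm m)^2 - 2 * t * Re (cinner z m)" for t
    proof -
      have "scaleC (of_real t) m \<in> N" using Nsc mN by blast
      then have "norm z \<le> norm (z - scaleC (of_real t) m)" using pmin z_def by blast
      then have "(norm z)^2 \<le> (norm (z - scaleC (of_real t) m))^2" by (simp add: power_mono)
      also have "\<dots> = (norm z)^2 + t^2 * (norm m)^2 - 2 * t * Re (cinner z m)"
        by (simp add: norm_diff_sq scaleC_of_real[symmetric] cinner_scaleC_right norm_scaleC power_mult_distrib)
      finally show ?thesis by simp
    qed
    then show ?thesis using real_quad0[of "(norm m)^2" "Re (cinner z m)"] False by simp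
  qed
  have "cinner m z = 0" if mN: "m \<in> N" for m
  proof -
    have "Re (cinner z (scaleC (-\<i>) m)) = 0" using re0 Nsc mN by blast
    then have "Im (cinner z m) = 0" by (simp add: cinner_scaleC_right)
    with re0[OF mN] have "cinner z m = 0" by (simp add: complex_eq_iff)
    then show ?thesis by (metis cinner_commute complex_cnj_zero)
  qed
  then show ?thesis using pN z_def by blast
qed


lemma rep_facts:
  fixes \<pi> :: "'a::cstar_algebra \<Rightarrow> 'h::chilbert_space \<Rightarrow> 'h"
  assumes "is_representation \<pi>"
  shows "\<pi> (a + b) x = \<pi> a x + \<pi> b x" "\<pi> (scaleC c a) x = scaleC c (\<pi> a x)"
    "\<pi> (a * b) x = \<pi> a (\<pi> b x)" "cinner (\<pi> a x) y = cinner x (\<pi> (cstar a) y)"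
    "\<pi> (a - b) x = \<pi> a x - \<pi> b x"
proof -
  show add: "\<pi> (a + b) x = \<pi> a x + \<pi> b x" using assms unfolding is_representation_def by simp
  show sc: "\<pi> (scaleC c a) x = scaleC c (\<pi> a x)" for c a using assms unfolding is_representation_def by simp
  show "\<pi> (a * b) x = \<pi> a (\<pi> b x)" using assms unfolding is_representation_def by simp
  have "is_adjoint (\<pi> (cstar a)) (\<pi> (cstar (cstar a)))" using assms unfolding is_representation_def by blast
  then show "cinner (\<pi> a x) y = cinner x (\<pi> (cstar a) y)" unfolding is_adjoint_def cstar_cstar by blast
  have eq: "a - b = a + scaleC (-1) b" by (simp add: scaleC_minus1)
  have "\<pi> (a - b) x = \<pi> a x + scaleC (-1) (\<pi> b x)"
    unfolding eq using assms unfolding is_representation_def by simp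
  then show "\<pi> (a - b) x = \<pi> a x - \<pi> b x" by (simp add: scaleC_minus1)
qed

lemma funpow_fixed: "f b = b \<Longrightarrow> (f ^^ n) b = b"
  by (induction n) auto

theorem lemma4p2:
  fixes \<alpha> :: "'a::cstar_algebra \<Rightarrow> 'a"
    and \<phi> \<omega> :: "'a \<Rightarrow> complex"
    and \<pi>\<phi> :: "'a \<Rightarrow> 'h::chilbert_space \<Rightarrow> 'h" and U :: "'h \<Rightarrow> 'h" and \<Phi> :: 'h
    and \<pi>\<omega> :: "'a \<Rightarrow> 'k::chilbert_space \<Rightarrow> 'k" and \<Omega> :: 'k
    and \<B> :: "'a set"
    and E1 :: "'h \<Rightarrow> 'h"
  assumes "is_cstar_dynamical_system \<alpha> \<phi>"
    and "is_GNS_covariant \<alpha> \<phi> \<pi>\<phi> U \<Phi>"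
    and "is_state \<omega>"
    and "is_GNS \<omega> \<pi>\<omega> \<Omega>"
    and "is_star_subalgebra \<B>"
    and "generic \<omega> \<alpha> \<phi> \<B>"
    and "is_orth_proj E1 {x. U x = x}"
    and "closure {\<pi>\<phi> b \<Phi> | b. b \<in> \<B> \<and> \<alpha> b = b} = range E1"
  shows "(\<exists>!V :: 'h \<Rightarrow> 'k. partial_isometry V
            \<and> (\<exists>W. is_adjoint V W \<and> W \<circ> V = E1)
            \<and> (\<forall>b\<in>\<B>. \<alpha> b = b \<longrightarrow> V (\<pi>\<phi> b \<Phi>) = \<pi>\<omega> b \<Omega>))
         \<and> (\<forall>b\<in>\<B>. \<alpha> b = b \<longrightarrow> norm (\<pi>\<omega> b \<Omega>) = norm (\<pi>\<phi> b \<Phi>))"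
proof -
  have aut: "is_automorphism \<alpha>" using assms(1) unfolding is_cstar_dynamical_system_def by blast
  have \<alpha>add: "\<And>x y. \<alpha> (x + y) = \<alpha> x + \<alpha> y" and \<alpha>sc: "\<And>c x. \<alpha> (scaleC c x) = scaleC c (\<alpha> x)"
    and \<alpha>mul: "\<And>x y. \<alpha> (x * y) = \<alpha> x * \<alpha> y" and \<alpha>star: "\<And>x. \<alpha> (cstar x) = cstar (\<alpha> x)"
    using aut unfolding is_automorphism_def clinear_fun_def by auto
  have \<alpha>diff: "\<alpha> (x - y) = \<alpha> x - \<alpha> y" for x y
  proof -
    have eq: "x - y = x + scaleC (-1) y" by (simp add: scaleC_minus1)
    have "\<alpha> (x - y) = \<alpha> x + scaleC (-1) (\<alpha> y)" unfolding eq \<alpha>add \<alpha>sc ..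
    then show ?thesis by (simp add: scaleC_minus1)
  qed
  have GNS\<phi>: "is_GNS \<phi> \<pi>\<phi> \<Phi>" and unit: "is_unitary U"
    using assms(2) unfolding is_GNS_covariant_def by auto
  have rep\<phi>: "is_representation \<pi>\<phi>" and \<phi>def: "\<And>a. cinner \<Phi> (\<pi>\<phi> a \<Phi>) = \<phi> a"
    using GNS\<phi> unfolding is_GNS_def by auto
  have rep\<omega>: "is_representation \<pi>\<omega>" and \<omega>def: "\<And>a. cinner \<Omega> (\<pi>\<omega> a \<Omega>) = \<omega> a"
    using assms(4) unfolding is_GNS_def by auto
  note R\<phi> = rep_facts[OF rep\<phi>] and R\<omega> = rep_facts[OF rep\<omega>]
  have Badd: "\<And>x y. x \<in> \<B> \<Longrightarrow> y \<in> \<B> \<Longrightarrow> x + y \<in> \<B>"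
    and Bmul: "\<And>x y. x \<in> \<B> \<Longrightarrow> y \<in> \<B> \<Longrightarrow> x * y \<in> \<B>"
    and Bsc: "\<And>c x. x \<in> \<B> \<Longrightarrow> scaleC c x \<in> \<B>"
    and Bstar: "\<And>x. x \<in> \<B> \<Longrightarrow> cstar x \<in> \<B>"
    using assms(5) unfolding is_star_subalgebra_def by auto
  have Bdiff: "x - y \<in> \<B>" if "x \<in> \<B>" "y \<in> \<B>" for x y
  proof -
    have eq: "x - y = x + scaleC (-1) y" by (simp add: scaleC_minus1)
    show ?thesis unfolding eq by (rule Badd[OF that(1) Bsc[OF that(2)]])
  qed
  define F where "F = {b \<in> \<B>. \<alpha> b = b}"
  have Fadd: "b + c \<in> F" if "b \<in> F" "c \<in> F" for b c
    using that Badd \<alpha>add unfolding F_def by auto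
  have Fsc: "scaleC z b \<in> F" if "b \<in> F" for b z
    using that Bsc \<alpha>sc unfolding F_def by auto
  have Fdiff: "b - c \<in> F" if "b \<in> F" "c \<in> F" for b c
    using that Bdiff \<alpha>diff unfolding F_def by auto
  have Fss: "cstar b * b \<in> F" if "b \<in> F" for b
    using that Bmul Bstar \<alpha>mul \<alpha>star unfolding F_def by auto
  have \<omega>\<phi>: "\<omega> b = \<phi> b" if "b \<in> F" for b
  proof -
    have bB: "b \<in> \<B>" and bfix: "\<alpha> b = b" using that unfolding F_def by auto
    have lim: "(\<lambda>N. (\<Sum>n<N. \<omega> ((\<alpha> ^^ n) b)) / of_nat N) \<longlonglongrightarrow> \<phi> b"
      using assms(6) bB unfolding generic_def by blast
    have "eventually (\<lambda>N. (\<Sum>n<N. \<omega> ((\<alpha> ^^ n) b)) / of_nat N = \<omega> b) sequentially"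
      unfolding eventually_sequentially
    proof (intro exI[of _ 1] allI impI)
      fix N :: nat assume "N \<ge> 1"
      then show "(\<Sum>n<N. \<omega> ((\<alpha> ^^ n) b)) / of_nat N = \<omega> b"
        by (simp add: funpow_fixed[of \<alpha> b, OF bfix])
    qed
    then have "(\<lambda>N. (\<Sum>n<N. \<omega> ((\<alpha> ^^ n) b)) / of_nat N) \<longlonglongrightarrow> \<omega> b"
      by (rule tendsto_eventually)
    from LIMSEQ_unique[OF this lim] show ?thesis .
  qed
  have normeq: "norm (\<pi>\<omega> b \<Omega>) = norm (\<pi>\<phi> b \<Phi>)" if "b \<in> F" for b
  proof -
    have "cinner (\<pi>\<omega> b \<Omega>) (\<pi>\<omega> b \<Omega>) = \<omega> (cstar b * b)"
      by (simp add: R\<omega>(4) R\<omega>(3)[symmetric] \<omega>def)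
    also have "\<dots> = \<phi> (cstar b * b)" using \<omega>\<phi> Fss that by blast
    also have "\<dots> = cinner (\<pi>\<phi> b \<Phi>) (\<pi>\<phi> b \<Phi>)"
      by (simp add: R\<phi>(4) R\<phi>(3)[symmetric] \<phi>def)
    finally show ?thesis by (simp add: norm_eq_sqrt_cinner)
  qed
  have disteq: "norm (\<pi>\<omega> b \<Omega> - \<pi>\<omega> c \<Omega>) = norm (\<pi>\<phi> b \<Phi> - \<pi>\<phi> c \<Phi>)" if "b \<in> F" "c \<in> F" for b c
    using normeq[OF Fdiff[OF that]] by (simp add: R\<omega>(5) R\<phi>(5))
  define D where "D = (\<lambda>b. \<pi>\<phi> b \<Phi>) ` F"
  define Mu where "Mu = {x. U x = x}"
  have Ulin: "clinear_fun U" using unit unfolding is_unitary_def cbounded_linear_def by blast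
  have Uadd: "U (x + y) = U x + U y" and Usc: "U (scaleC c x) = scaleC c (U x)" for x y c
    using Ulin unfolding clinear_fun_def by auto
  have Muadd: "x + y \<in> Mu" if "x \<in> Mu" "y \<in> Mu" for x y using that Uadd unfolding Mu_def by auto
  have Musc: "scaleC c x \<in> Mu" if "x \<in> Mu" for x c using that Usc unfolding Mu_def by auto
  have Mudiff: "x - y \<in> Mu" if "x \<in> Mu" "y \<in> Mu" for x y
  proof -
    have eq: "x - y = x + scaleC (-1) y" by (simp add: scaleC_minus1)
    show ?thesis unfolding eq by (rule Muadd[OF that(1) Musc[OF that(2)]])
  qed
  have Mu0: "0 \<in> Mu" using Uadd[of 0 0] unfolding Mu_def by simp
  have E1in: "E1 x \<in> Mu" for x using assms(7) unfolding is_orth_proj_def Mu_def by blast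
  have E1orth: "cinner m (x - E1 x) = 0" if "m \<in> Mu" for m x
    using assms(7) that unfolding is_orth_proj_def Mu_def by blast
  have zeroMu: "a = 0" if "a \<in> Mu" "\<And>m. m \<in> Mu \<Longrightarrow> cinner m a = 0" for a
    using that cinner_self_zero by blast
  have E1id: "E1 m = m" if "m \<in> Mu" for m
  proof -
    have "m - E1 m = 0"
    proof (rule zeroMu)
      show "m - E1 m \<in> Mu" by (rule Mudiff[OF that E1in])
      show "cinner m' (m - E1 m) = 0" if "m' \<in> Mu" for m' by (rule E1orth[OF that])
    qed
    then show ?thesis by simp
  qed
  have rangeE1: "range E1 = Mu" using E1in E1id by (metis image_subsetI rangeI subsetI subset_antisym)
  have E1add: "E1 (x + y) = E1 x + E1 y" for x y
  proof -
    have "E1 x + E1 y - E1 (x + y) = 0"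
    proof (rule zeroMu)
      show "E1 x + E1 y - E1 (x + y) \<in> Mu" by (intro Mudiff Muadd E1in)
      fix m assume m: "m \<in> Mu"
      have eq: "E1 x + E1 y - E1 (x + y) = (x + y - E1 (x + y)) - (x - E1 x) - (y - E1 y)"
        by (simp add: algebra_simps)
      show "cinner m (E1 x + E1 y - E1 (x + y)) = 0"
        unfolding eq cinner_diff_right[of m "(x + y - E1 (x + y)) - (x - E1 x)"]
          cinner_diff_right[of m "x + y - E1 (x + y)"] E1orth[OF m] by simp
    qed
    then show ?thesis by simp
  qed
  have E1sc: "E1 (scaleC c x) = scaleC c (E1 x)" for c x
  proof -
    have "scaleC c (E1 x) - E1 (scaleC c x) = 0"
    proof (rule zeroMu)
      show "scaleC c (E1 x) - E1 (scaleC c x) \<in> Mu" by (intro Mudiff Musc E1in)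
      fix m assume m: "m \<in> Mu"
      have eq: "scaleC c (E1 x) - E1 (scaleC c x) = (scaleC c x - E1 (scaleC c x)) - scaleC c (x - E1 x)"
        by (simp add: scaleC_diff_right)
      show "cinner m (scaleC c (E1 x) - E1 (scaleC c x)) = 0"
        unfolding eq cinner_diff_right[of m "scaleC c x - E1 (scaleC c x)"] cinner_scaleC_right E1orth[OF m] by simp
    qed
    then show ?thesis by simp
  qed
  have E1norm: "norm (E1 x) \<le> norm x" for x
  proof -
    have "(norm x)^2 = (norm (E1 x + (x - E1 x)))^2" by simp
    also have "\<dots> = (norm (E1 x))^2 + (norm (x - E1 x))^2"
      unfolding norm_add_sq by (simp add: E1orth[OF E1in])
    finally have "(norm (E1 x))^2 \<le> (norm x)^2" by simp
    then show ?thesis by (rule power2_le_imp_le) simp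
  qed
  have DF: "D = {\<pi>\<phi> b \<Phi> | b. b \<in> \<B> \<and> \<alpha> b = b}" unfolding D_def F_def by auto
  have Mclos: "closure D = Mu" using assms(8) rangeE1 DF by simp
  have DM: "D \<subseteq> Mu" using closure_subset Mclos by blast
  define f where "f y = \<pi>\<omega> (SOME b. b \<in> F \<and> \<pi>\<phi> b \<Phi> = y) \<Omega>" for y
  have feq: "f (\<pi>\<phi> b \<Phi>) = \<pi>\<omega> b \<Omega>" if "b \<in> F" for b
  proof -
    define b0 where "b0 = (SOME b'. b' \<in> F \<and> \<pi>\<phi> b' \<Phi> = \<pi>\<phi> b \<Phi>)"
    have b0: "b0 \<in> F \<and> \<pi>\<phi> b0 \<Phi> = \<pi>\<phi> b \<Phi>" unfolding b0_def by (rule someI[of _ b]) (use that in auto)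
    have "norm (\<pi>\<omega> b0 \<Omega> - \<pi>\<omega> b \<Omega>) = 0" using disteq[of b0 b] b0 that by simp
    then show ?thesis unfolding f_def b0_def[symmetric] by simp
  qed
  have fdist: "dist (f x) (f y) = dist x y" if "x \<in> D" "y \<in> D" for x y
    using that disteq feq unfolding D_def by (auto simp: dist_norm)
  have uc: "uniformly_continuous_on D f"
    unfolding uniformly_continuous_on_def using fdist by metis
  obtain g where guc: "uniformly_continuous_on (closure D) g" and gD: "\<And>x. x \<in> D \<Longrightarrow> f x = g x"
    and "\<And>Y h x. D \<subseteq> Y \<Longrightarrow> Y \<subseteq> closure D \<Longrightarrow> continuous_on Y h \<Longrightarrow> (\<And>x. x \<in> D \<Longrightarrow> f x = h x) \<Longrightarrow> x \<in> Y \<Longrightarrow> h x = g x"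
    by (rule uniformly_continuous_on_extension_on_closure[OF uc]) iprover
  have gcont: "continuous_on Mu g" using uniformly_continuous_imp_continuous[OF guc] Mclos by simp
  have gnorm: "norm (g x) = norm x" if "x \<in> Mu" for x
  proof -
    have "(\<lambda>x. norm (g x) - norm x) x = 0"
    proof (rule continuous_constant_on_closure[where S=D])
      show "continuous_on (closure D) (\<lambda>x. norm (g x) - norm x)" unfolding Mclos
        by (intro continuous_intros gcont)
      show "x \<in> closure D" using that Mclos by simp
      fix y assume "y \<in> D"
      then obtain b where "b \<in> F" "y = \<pi>\<phi> b \<Phi>" unfolding D_def by blast
      moreover have "g y = \<pi>\<omega> b \<Omega>" using gD[OF \<open>y \<in> D\<close>, symmetric] feq[OF \<open>b \<in> F\<close>] \<open>y = \<pi>\<phi> b \<Phi>\<close> by simp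
      ultimately show "norm (g y) - norm y = 0" using normeq by simp
    qed
    then show ?thesis by simp
  qed
  have gadd1: "g (x + y) = g x + g y" if xM: "x \<in> Mu" and yD: "y \<in> D" for x y
  proof -
    have "(\<lambda>x. g (x + y) - g x - g y) x = 0"
    proof (rule continuous_constant_on_closure[where S=D and f="\<lambda>x. g (x + y) - g x - g y"])
      have "continuous_on Mu (\<lambda>x. g (x + y))"
        by (rule continuous_on_compose2[OF gcont]) (use xM yD DM Muadd in \<open>auto intro!: continuous_intros\<close>)
      then show "continuous_on (closure D) (\<lambda>x. g (x + y) - g x - g y)" unfolding Mclos
        by (intro continuous_intros gcont)
      show "x \<in> closure D" using xM Mclos by simp
      fix z assume "z \<in> D"
      then obtain b c where bc: "b \<in> F" "z = \<pi>\<phi> b \<Phi>" "c \<in> F" "y = \<pi>\<phi> c \<Phi>" using yD unfolding D_def by blast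
      have zyeq: "z + y = \<pi>\<phi> (b + c) \<Phi>" using bc by (simp add: R\<phi>(1))
      have bcF: "b + c \<in> F" using Fadd bc by blast
      have zyD: "z + y \<in> D" unfolding D_def zyeq using bcF by blast
      have gzy: "g (z + y) = \<pi>\<omega> b \<Omega> + \<pi>\<omega> c \<Omega>"
        using gD[OF zyD, symmetric] feq[OF bcF] zyeq by (simp add: R\<omega>(1))
      have gz: "g z = \<pi>\<omega> b \<Omega>" using gD[OF \<open>z \<in> D\<close>, symmetric] feq[OF bc(1)] bc(2) by simp
      have gy: "g y = \<pi>\<omega> c \<Omega>" using gD[OF yD, symmetric] feq[OF bc(3)] bc(4) by simp
      show "g (z + y) - g z - g y = 0" unfolding gzy gz gy by simp
    qed
    then show ?thesis by (simp add: algebra_simps)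
  qed
  have gadd: "g (x + y) = g x + g y" if "x \<in> Mu" "y \<in> Mu" for x y
  proof -
    have "(\<lambda>y. g (x + y) - g x - g y) y = 0"
    proof (rule continuous_constant_on_closure[where S=D and f="\<lambda>y. g (x + y) - g x - g y"])
      have "continuous_on Mu (\<lambda>y. g (x + y))"
        by (rule continuous_on_compose2[OF gcont]) (use that DM Muadd in \<open>auto intro!: continuous_intros\<close>)
      then show "continuous_on (closure D) (\<lambda>y. g (x + y) - g x - g y)" unfolding Mclos
        by (intro continuous_intros gcont)
      show "y \<in> closure D" using that Mclos by simp
      fix z assume "z \<in> D"
      then show "g (x + z) - g x - g z = 0" using gadd1[OF that(1)] by simp
    qed
    then show ?thesis by (simp add: algebra_simps)
  qed
  have gsc: "g (scaleC c x) = scaleC c (g x)" if "x \<in> Mu" for x c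
  proof -
    have "(\<lambda>x. g (scaleC c x) - scaleC c (g x)) x = 0"
    proof (rule continuous_constant_on_closure[where S=D and f="\<lambda>x. g (scaleC c x) - scaleC c (g x)"])
      have "continuous_on Mu (\<lambda>x. g (scaleC c x))"
        by (rule continuous_on_compose2[OF gcont linear_continuous_on[OF bounded_linear_scaleC]])
          (use Musc in auto)
      moreover have "continuous_on Mu (\<lambda>x. scaleC c (g x))"
        by (rule continuous_on_compose2[OF linear_continuous_on[OF bounded_linear_scaleC] gcont]) auto
      ultimately show "continuous_on (closure D) (\<lambda>x. g (scaleC c x) - scaleC c (g x))" unfolding Mclos
        by (intro continuous_intros)
      show "x \<in> closure D" using that Mclos by simp
      fix z assume "z \<in> D"
      then obtain b where bc: "b \<in> F" "z = \<pi>\<phi> b \<Phi>" unfolding D_def by blast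
      have zyeq: "scaleC c z = \<pi>\<phi> (scaleC c b) \<Phi>" using bc by (simp add: R\<phi>(2))
      have bcF: "scaleC c b \<in> F" using Fsc bc by blast
      have zyD: "scaleC c z \<in> D" unfolding D_def zyeq using bcF by blast
      have gzy: "g (scaleC c z) = scaleC c (\<pi>\<omega> b \<Omega>)"
        using gD[OF zyD, symmetric] feq[OF bcF] zyeq by (simp add: R\<omega>(2))
      have gz: "g z = \<pi>\<omega> b \<Omega>" using gD[OF \<open>z \<in> D\<close>, symmetric] feq[OF bc(1)] bc(2) by simp
      show "g (scaleC c z) - scaleC c (g z) = 0" unfolding gzy gz by simp
    qed
    then show ?thesis by simp
  qed
  have gdiff: "g (x - y) = g x - g y" if "x \<in> Mu" "y \<in> Mu" for x y
  proof -
    have eq: "x - y = x + scaleC (-1) y" by (simp add: scaleC_minus1)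
    have "g (x - y) = g x + scaleC (-1) (g y)" unfolding eq
      using gadd[OF that(1) Musc[OF that(2)]] gsc[OF that(2)] by simp
    then show ?thesis by (simp add: scaleC_minus1)
  qed
  have gcinner: "cinner (g x) (g y) = cinner x y" if "x \<in> Mu" "y \<in> Mu" for x y
    by (rule cinner_eq_from_norms)
      (use that in \<open>simp_all add: gnorm gadd[symmetric] gsc[symmetric] Muadd Musc\<close>)
  have ginj: "x = y" if "x \<in> Mu" "y \<in> Mu" "g x = g y" for x y
    using gnorm[OF Mudiff[OF that(1,2)]] gdiff[OF that(1,2)] that(3) by simp
  have E1diff: "E1 (x - y) = E1 x - E1 y" for x y
  proof -
    have eq: "x - y = x + scaleC (-1) y" by (simp add: scaleC_minus1)
    have "E1 (x - y) = E1 x + scaleC (-1) (E1 y)" unfolding eq E1add E1sc ..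
    then show ?thesis by (simp add: scaleC_minus1)
  qed
  have g0: "g 0 = 0" using gsc[OF Mu0, of 0] by (simp add: scaleC_zero_left)
  define V where "V y = g (E1 y)" for y
  have VD: "V (\<pi>\<phi> b \<Phi>) = \<pi>\<omega> b \<Omega>" if "b \<in> F" for b
  proof -
    have inD: "\<pi>\<phi> b \<Phi> \<in> D" unfolding D_def using that by blast
    then have "E1 (\<pi>\<phi> b \<Phi>) = \<pi>\<phi> b \<Phi>" using DM E1id by blast
    then show ?thesis unfolding V_def using gD[OF inD, symmetric] feq[OF that] by simp
  qed
  have Vcbl: "cbounded_linear V"
    unfolding cbounded_linear_def clinear_fun_def
  proof (intro conjI allI exI[of _ 1])
    fix x y show "V (x + y) = V x + V y" unfolding V_def E1add by (rule gadd[OF E1in E1in])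
  next
    fix c x show "V (scaleC c x) = scaleC c (V x)" unfolding V_def E1sc by (rule gsc[OF E1in])
  next
    fix x show "norm (V x) \<le> 1 * norm x" unfolding V_def using gnorm[OF E1in] E1norm by simp
  qed
  define N where "N = g ` Mu"
  have N0: "0 \<in> N" unfolding N_def using g0 Mu0 by force
  have Nadd: "a + b \<in> N" if aN: "a \<in> N" and bN: "b \<in> N" for a b
  proof -
    obtain x y where xy: "x \<in> Mu" "y \<in> Mu" "a = g x" "b = g y" using aN bN unfolding N_def by blast
    then have "a + b = g (x + y)" using gadd by simp
    then show ?thesis unfolding N_def using Muadd[OF xy(1,2)] by blast
  qed
  have Nsc: "scaleC c a \<in> N" if aN: "a \<in> N" for c a
  proof -
    obtain x where xy: "x \<in> Mu" "a = g x" using aN unfolding N_def by blast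
    then have "scaleC c a = g (scaleC c x)" using gsc by simp
    then show ?thesis unfolding N_def using Musc[OF xy(1)] by blast
  qed
  have Nclosed: "closed Mu" using Mclos closed_closure by metis
  have Ncomp: "complete N"
    unfolding complete_def
  proof (intro allI impI)
    fix \<sigma> :: "nat \<Rightarrow> 'k" assume h: "(\<forall>n. \<sigma> n \<in> N) \<and> Cauchy \<sigma>"
    have "\<exists>m. m \<in> Mu \<and> g m = \<sigma> n" for n
    proof -
      have "\<sigma> n \<in> g ` Mu" using h unfolding N_def by blast
      then show ?thesis by (auto simp: image_iff)
    qed
    then have "\<forall>n. \<exists>m. m \<in> Mu \<and> g m = \<sigma> n" by blast
    then obtain m where mM: "\<And>n. m n \<in> Mu" and gm: "\<And>n. g (m n) = \<sigma> n" by metis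
    have "Cauchy m"
    proof (rule CauchyI)
      fix e :: real assume "0 < e"
      from CauchyD[OF conjunct2[OF h] this] obtain M where M: "\<forall>a\<ge>M. \<forall>b\<ge>M. norm (\<sigma> a - \<sigma> b) < e" by blast
      have "norm (m a - m b) = norm (\<sigma> a - \<sigma> b)" for a b
        using gnorm[OF Mudiff[OF mM mM]] gdiff[OF mM mM] gm by simp
      with M show "\<exists>M. \<forall>a\<ge>M. \<forall>b\<ge>M. norm (m a - m b) < e" by auto
    qed
    moreover have "complete Mu" using Nclosed complete_eq_closed by blast
    ultimately obtain l where lM: "l \<in> Mu" and lim: "m \<longlonglongrightarrow> l"
      using mM unfolding complete_def by blast
    have "(\<lambda>n. g (m n)) \<longlonglongrightarrow> g l"
      by (rule continuous_on_tendsto_compose[OF gcont lim lM]) (simp add: mM)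
    then have "\<sigma> \<longlonglongrightarrow> g l" using gm by simp
    moreover have "g l \<in> N" unfolding N_def using lM by blast
    ultimately show "\<exists>l\<in>N. \<sigma> \<longlonglongrightarrow> l" by blast
  qed
  have Pex: "\<exists>p. p \<in> N \<and> (\<forall>m\<in>N. cinner m (x - p) = 0)" for x
    using proj_exists[of N, OF N0 Nadd Nsc Ncomp] by blast
  define P where "P x = (SOME p. p \<in> N \<and> (\<forall>m\<in>N. cinner m (x - p) = 0))" for x
  have PN: "P x \<in> N" and Porth: "\<And>m. m \<in> N \<Longrightarrow> cinner m (x - P x) = 0" for x
    using someI_ex[OF Pex[of x]] unfolding P_def by auto
  have Wex: "\<exists>h. h \<in> Mu \<and> g h = P x" for x
  proof -
    have "P x \<in> g ` Mu" using PN[of x] unfolding N_def .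
    then show ?thesis by (auto simp: image_iff)
  qed
  define W where "W x = (SOME h. h \<in> Mu \<and> g h = P x)" for x
  have WM: "W x \<in> Mu" and gW: "g (W x) = P x" for x
    using someI_ex[OF Wex[of x]] unfolding W_def by auto
  have VN: "V y \<in> N" for y unfolding V_def N_def by (rule imageI[OF E1in])
  have adj: "is_adjoint V W"
    unfolding is_adjoint_def
  proof (intro allI)
    fix x y
    have "cinner (W x) y = cinner (W x) (E1 y + (y - E1 y))" by simp
    also have "\<dots> = cinner (W x) (E1 y) + cinner (W x) (y - E1 y)" by (rule cinner_add_right)
    also have "\<dots> = cinner (W x) (E1 y)" using E1orth[OF WM] by simp
    also have "\<dots> = cinner (P x) (V y)" unfolding V_def gW[symmetric] by (rule gcinner[OF WM E1in, symmetric])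
    also have "\<dots> = cinner x (V y)"
    proof -
      have "cinner x (V y) = cinner (P x + (x - P x)) (V y)" by simp
      also have "\<dots> = cinner (P x) (V y) + cinner (x - P x) (V y)" by (rule cinner_add_left)
      also have "cinner (x - P x) (V y) = cnj (cinner (V y) (x - P x))" by (rule cinner_commute)
      also have "\<dots> = 0" using Porth[OF VN] by simp
      finally show ?thesis by simp
    qed
    finally show "cinner (W x) y = cinner x (V y)" .
  qed
  have PgId: "P (g m) = g m" if "m \<in> Mu" for m
  proof -
    obtain h where hM: "h \<in> Mu" and gh: "g h = P (g m)" using Wex by blast
    have aN: "g m - P (g m) \<in> N" unfolding N_def gh[symmetric] gdiff[OF that hM, symmetric]
      using Mudiff[OF that hM] by blast
    have "cinner (g m - P (g m)) (g m - P (g m)) = 0" by (rule Porth[OF aN])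
    then show ?thesis using cinner_self_zero by fastforce
  qed
  have WV: "W (V y) = E1 y" for y
  proof -
    have "g (W (V y)) = g (E1 y)" unfolding gW V_def using PgId[OF E1in] by simp
    then show ?thesis using ginj[OF WM E1in] by blast
  qed
  have WVE: "W \<circ> V = E1" by (rule ext) (simp add: WV)
  have E1E1: "E1 \<circ> E1 = E1" by (rule ext) (simp add: E1id[OF E1in])
  have PI: "partial_isometry V"
    unfolding partial_isometry_def using Vcbl adj WVE E1E1 by metis
  have uniq: "V' = V" if pV: "partial_isometry V'" and eW: "\<exists>W. is_adjoint V' W \<and> W \<circ> V' = E1"
    and agr: "\<forall>b\<in>\<B>. \<alpha> b = b \<longrightarrow> V' (\<pi>\<phi> b \<Phi>) = \<pi>\<omega> b \<Omega>" for V'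
  proof
    fix y
    obtain W' where adj': "is_adjoint V' W'" and WV': "W' \<circ> V' = E1" using eW by blast
    have cbl': "cbounded_linear V'" using pV unfolding partial_isometry_def by blast
    then have lin': "V' (a + b) = V' a + V' b" for a b unfolding cbounded_linear_def clinear_fun_def by blast
    have cont': "continuous_on Mu V'" by (rule linear_continuous_on[OF cbl_bl[OF cbl']])
    define z where "z = y - E1 y"
    have E1z: "E1 z = 0" unfolding z_def E1diff E1id[OF E1in] by simp
    have "cinner (V' z) (V' z) = cinner (W' (V' z)) z" using adj' unfolding is_adjoint_def by metis
    also have "W' (V' z) = E1 z" using WV' by (metis comp_apply)
    finally have "cinner (V' z) (V' z) = 0" using E1z by simp
    then have Vz: "V' z = 0" by (rule cinner_self_zero)
    have "(\<lambda>x. V' x - g x) (E1 y) = 0"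
    proof (rule continuous_constant_on_closure[where S=D and f="\<lambda>x. V' x - g x"])
      show "continuous_on (closure D) (\<lambda>x. V' x - g x)" unfolding Mclos
        by (intro continuous_on_diff cont' gcont)
      show "E1 y \<in> closure D" using E1in Mclos by simp
      fix w assume "w \<in> D"
      then obtain b where b: "b \<in> F" "w = \<pi>\<phi> b \<Phi>" unfolding D_def by blast
      have "V' w = \<pi>\<omega> b \<Omega>" using agr b unfolding F_def by blast
      moreover have "g w = \<pi>\<omega> b \<Omega>" using gD[OF \<open>w \<in> D\<close>, symmetric] feq[OF b(1)] b(2) by simp
      ultimately show "V' w - g w = 0" by simp
    qed
    then have "V' (E1 y) = g (E1 y)" by simp
    moreover have "V' y = V' (E1 y) + V' z" unfolding z_def lin'[symmetric] by simp
    ultimately show "V' y = V y" using Vz unfolding V_def by simp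
  qed
  have ex1: "\<exists>!V :: 'h \<Rightarrow> 'k. partial_isometry V
            \<and> (\<exists>W. is_adjoint V W \<and> W \<circ> V = E1)
            \<and> (\<forall>b\<in>\<B>. \<alpha> b = b \<longrightarrow> V (\<pi>\<phi> b \<Phi>) = \<pi>\<omega> b \<Omega>)"
  proof (rule ex1I[where a=V])
    show "partial_isometry V \<and> (\<exists>W. is_adjoint V W \<and> W \<circ> V = E1)
            \<and> (\<forall>b\<in>\<B>. \<alpha> b = b \<longrightarrow> V (\<pi>\<phi> b \<Phi>) = \<pi>\<omega> b \<Omega>)"
      using PI adj WVE VD unfolding F_def by blast
    fix V' assume "partial_isometry V' \<and> (\<exists>W. is_adjoint V' W \<and> W \<circ> V' = E1)
            \<and> (\<forall>b\<in>\<B>. \<alpha> b = b \<longrightarrow> V' (\<pi>\<phi> b \<Phi>) = \<pi>\<omega> b \<Omega>)"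
    then show "V' = V" using uniq by blast
  qed
  moreover have "\<forall>b\<in>\<B>. \<alpha> b = b \<longrightarrow> norm (\<pi>\<omega> b \<Omega>) = norm (\<pi>\<phi> b \<Phi>)"
    using normeq unfolding F_def by blast
  ultimately show ?thesis by blast
qed

end
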